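(* Let $S$ be a real sequence (data sequence), let $Q=\{Q[1],\dots,Q[n]\}$ be a query sequence of length $n$, and let $S[i:j]$ be a subsequence of $S$ with $j-i+1=n$. Let $\epsilon\ge 0$, let $\omega\ge 1$ and $p\ge 1$ be integers with $p\omega\le n$. For $k=1,\dots,p$ define the query windows $\overline{q_k}=\overline{Q}[(k-1)\omega+1 : k\omega]$ (windows of the LD-sequence $\overline{Q}$) and the data windows $s_k=S[i+(k-1)\omega : i+k\omega-1]$, and let $\mathbb{S}_k$ be the set of all LD-windows of $s_k$, i.e. $\mathbb{S}_k=\{\overline{S_{\{i',j'\}}[a_k:b_k]} : S[i':j'] \text{ is a subsequence of } S \text{ containing } s_k=S[a_k:b_k]\}$. Let $T:\mathbb{R}^\omega\to\mathbb{R}^f$ be a lower-dimensional transformation satisfying $D(T(x),T(y))\le D(x,y)$ for all $x,y\in\mathbb{R}^\omega$. If $D(\overline{Q},\overline{S[i:j]})\le\epsilon$, then there exists $k\in\{1,\dots,p\}$ such that $$D\big(T(\overline{q_k}),\,\mathbb{M}(T(\mathbb{S}_k))\big)\le \epsilon/\sqrt{p}.$$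
   Context: $D(X,Y)=\sqrt{\sum_{t}|X[t]-Y[t]|^2}$ is the Euclidean distance between sequences (or vectors) of equal length. $S[a:b]$ denotes the contiguous subsequence $S[a],S[a+1],\dots,S[b]$; a subsequence $S[i':j']$ contains $S[a:b]$ if $i'\le a\le b\le j'$. Trend line: for a sequence $X$ indexed by $k=1,\dots,m$, its trend line is the least-squares line $g(k)=\alpha k+\beta$ with $\alpha=\frac{m\sum_k kX[k]-\sum_k k\sum_k X[k]}{m\sum_k k^2-(\sum_k k)^2}$, $\beta=\frac{\sum_k X[k]}{m}-\alpha\frac{\sum_k k}{m}$. The LD-sequence (linear detrending sequence) of $X$ is $\overline{X}$ with $\overline{X}[k]=X[k]-g(k)$. For a subsequence $S[i':j']$, its trend line $g$ is the least-squares line fitted to the points $(k,S[k])$, $k=i',\dots,j'$ (equivalently, fitted after reindexing; the detrended values are the same), and $\overline{S[i':j']}$ is the corresponding LD-sequence. LD-window: if $S[a:b]$ is contained in $S[i':j']$ and $g$ is the trend line of $S[i':j']$, the LD-window of $S[a:b]$ against $S[i':j']$, denoted $\overline{S_{\{i',j'\}}[a:b]}$, is the window with entries $S[k]-g(k)$ for $k=a,\dots,b$. LD-MBR: for a set $\mathbb{S}$ of LD-windows of a window, $\mathbb{M}(T(\mathbb{S}))$ is the minimum axis-parallel bounding box in $\mathbb{R}^f$ containing all points $T(\overline{s})$, $\overline{s}\in\mathbb{S}$. The distance $D(x,\mathbb{M})$ between a point $x$ and a box $\mathbb{M}$ is $\min_{y\in\mathbb{M}}D(x,y)$. *)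

theory Defs
  imports Complex_Main
begin

text \<open>Sequences/vectors of a given length are represented as real lists.
  Data sequence S is a function on indices 1..N (N = its length).\<close>

definition dist_l :: "real list \<Rightarrow> real list \<Rightarrow> real" where
  "dist_l x y = sqrt (\<Sum>t<length x. (x ! t - y ! t)^2)"

definition trend_alpha :: "real list \<Rightarrow> real" where
  "trend_alpha X = (let m = length X in
     (real m * (\<Sum>k=1..m. real k * X ! (k - 1)) - (\<Sum>k=1..m. real k) * (\<Sum>k=1..m. X ! (k - 1)))
     / (real m * (\<Sum>k=1..m. (real k)^2) - (\<Sum>k=1..m. real k)^2))"

definition trend_beta :: "real list \<Rightarrow> real" where
  "trend_beta X = (let m = length X in
     (\<Sum>k=1..m. X ! (k - 1)) / real m - trend_alpha X * (\<Sum>k=1..m. real k) / real m)"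

definition LD :: "real list \<Rightarrow> real list" where
  "LD X = map (\<lambda>k. X ! (k - 1) - (trend_alpha X * real k + trend_beta X)) [1..<length X + 1]"

definition subseq :: "(nat \<Rightarrow> real) \<Rightarrow> nat \<Rightarrow> nat \<Rightarrow> real list" where
  "subseq S a b = map S [a..<b + 1]"

text \<open>LD-window of S[a:b] against S[i':j'] (trend line fitted on the reindexed
  subsequence S[i':j'], position k corresponds to reindexed k - i' + 1).\<close>
definition ld_window :: "(nat \<Rightarrow> real) \<Rightarrow> nat \<Rightarrow> nat \<Rightarrow> nat \<Rightarrow> nat \<Rightarrow> real list" where
  "ld_window S i' j' a b =
     (let X = subseq S i' j' in
      map (\<lambda>k. S k - (trend_alpha X * real (k - i' + 1) + trend_beta X)) [a..<b + 1])"

definition ld_windows :: "(nat \<Rightarrow> real) \<Rightarrow> nat \<Rightarrow> nat \<Rightarrow> nat \<Rightarrow> real list set" where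
  "ld_windows S N a b = {ld_window S i' j' a b | i' j'. 1 \<le> i' \<and> i' \<le> a \<and> b \<le> j' \<and> j' \<le> N}"

definition MBR :: "nat \<Rightarrow> real list set \<Rightarrow> real list set" where
  "MBR f P = {y. length y = f \<and>
     (\<forall>d<f. (INF x\<in>P. x ! d) \<le> y ! d \<and> y ! d \<le> (SUP x\<in>P. x ! d))}"

definition dist_box :: "real list \<Rightarrow> real list set \<Rightarrow> real" where
  "dist_box x M = (INF y\<in>M. dist_l x y)"

end

theory Submission
  imports Defs
begin

lemma LD_len: "length (LD X) = length X"
  by (simp add: LD_def del: upt_Suc)

lemma LD_nth: "t < length X \<Longrightarrow> LD X ! t = X ! t - (trend_alpha X * real (t+1) + trend_beta X)"
  by (simp add: LD_def del: upt_Suc)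

lemma window_eq:
  assumes "(m+1)*\<omega> \<le> j - i + 1" "i \<le> j" "\<omega> \<ge> 1"
  shows "take \<omega> (drop (m*\<omega>) (LD (subseq S i j))) = ld_window S i j (i + m*\<omega>) (i + m*\<omega> + \<omega> - 1)"
proof (rule nth_equalityI)
  have lx: "length (subseq S i j) = j - i + 1" using assms by (simp add: subseq_def del: upt_Suc)
  show "length (take \<omega> (drop (m*\<omega>) (LD (subseq S i j)))) = length (ld_window S i j (i + m*\<omega>) (i + m*\<omega> + \<omega> - 1))"
    using assms lx by (simp add: LD_len ld_window_def Let_def del: upt_Suc)
  fix t assume "t < length (take \<omega> (drop (m*\<omega>) (LD (subseq S i j))))"
  hence t: "t < \<omega>" "m*\<omega>+t < j - i + 1" using lx by (auto simp: LD_len)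
  have e1: "subseq S i j ! (m*\<omega>+t) = S (i + m*\<omega> + t)"
    using t assms by (simp add: subseq_def add.assoc del: upt_Suc)
  show "take \<omega> (drop (m*\<omega>) (LD (subseq S i j))) ! t = ld_window S i j (i + m*\<omega>) (i + m*\<omega> + \<omega> - 1) ! t"
  proof -
    have "take \<omega> (drop (m*\<omega>) (LD (subseq S i j))) ! t = LD (subseq S i j) ! (m*\<omega>+t)"
      using t lx by (simp add: LD_len)
    also have "\<dots> = S (i + m*\<omega> + t) - (trend_alpha (subseq S i j) * real (m*\<omega>+t+1) + trend_beta (subseq S i j))"
      using t lx e1 by (simp add: LD_nth)
    finally show ?thesis
      using t assms lx by (simp add: ld_window_def Let_def algebra_simps del: upt_Suc)
  qed
qed

lemma sum_group: fixes p \<omega> :: nat shows "(\<Sum>m<p. \<Sum>t<\<omega>. A (m*\<omega>+t)) = (\<Sum>t<p*\<omega>. (A t :: real))"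
proof (induction p)
  case 0 then show ?case by simp
next
  case (Suc p)
  have "(\<Sum>t<Suc p*\<omega>. A t) = (\<Sum>t<p*\<omega>. A t) + (\<Sum>t\<in>{p*\<omega>..<p*\<omega>+\<omega>}. A t)"
    by (simp add: sum.atLeastLessThan_concat[symmetric] lessThan_atLeast0 add.commute)
  also have "(\<Sum>t\<in>{p*\<omega>..<p*\<omega>+\<omega>}. A t) = (\<Sum>t<\<omega>. A (p*\<omega>+t))"
    using sum.shift_bounds_nat_ivl[of A 0 "p*\<omega>" \<omega>] by (simp add: lessThan_atLeast0 add.commute)
  finally show ?case using Suc by simp
qed


lemma exists_small:
  fixes A :: "nat \<Rightarrow> real" and p \<omega> :: nat
  assumes "\<And>t. A t \<ge> 0" "p \<ge> 1" "(\<Sum>t<p*\<omega>. A t) \<le> \<epsilon>^2" "\<epsilon> \<ge> 0"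
  shows "\<exists>m<p. sqrt (\<Sum>t<\<omega>. A (m*\<omega>+t)) \<le> \<epsilon> / sqrt (real p)"
proof (rule ccontr)
  assume "\<not> ?thesis"
  hence h: "\<And>m. m < p \<Longrightarrow> \<epsilon> / sqrt (real p) < sqrt (\<Sum>t<\<omega>. A (m*\<omega>+t))" by auto
  have h2: "\<epsilon>^2 / real p < (\<Sum>t<\<omega>. A (m*\<omega>+t))" if "m < p" for m
  proof -
    have "0 \<le> \<epsilon> / sqrt (real p)" using assms by simp
    hence "(\<epsilon> / sqrt (real p))^2 < (sqrt (\<Sum>t<\<omega>. A (m*\<omega>+t)))^2"
      using h[OF that] by (simp add: power_strict_mono)
    moreover have "(\<Sum>t<\<omega>. A (m*\<omega>+t)) \<ge> 0" using assms by (simp add: sum_nonneg)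
    ultimately show ?thesis using assms by (simp add: power_divide)
  qed
  have "(\<Sum>m<p. \<epsilon>^2 / real p) < (\<Sum>m<p. \<Sum>t<\<omega>. A (m*\<omega>+t))"
    using assms h2 by (intro sum_strict_mono) (auto simp: lessThan_empty_iff)
  also have "\<dots> = (\<Sum>t<p*\<omega>. A t)" by (rule sum_group)
  finally show False using assms by simp
qed

theorem theorem1:
  fixes S :: "nat \<Rightarrow> real" and N :: nat
    and Q :: "real list" and n i j :: nat
    and \<epsilon> :: real and \<omega> p f :: nat
    and T :: "real list \<Rightarrow> real list"
  assumes "length Q = n"
    and "1 \<le> i" and "i \<le> j" and "j \<le> N" and "j - i + 1 = n"
    and "\<epsilon> \<ge> 0" and "\<omega> \<ge> 1" and "p \<ge> 1" and "p * \<omega> \<le> n"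
    and "\<And>x. length x = \<omega> \<Longrightarrow> length (T x) = f"
    and "\<And>x y. length x = \<omega> \<Longrightarrow> length y = \<omega> \<Longrightarrow> dist_l (T x) (T y) \<le> dist_l x y"
    and "dist_l (LD Q) (LD (subseq S i j)) \<le> \<epsilon>"
  shows "\<exists>k\<in>{1..p}.
     dist_box (T (take \<omega> (drop ((k - 1) * \<omega>) (LD Q))))
       (MBR f (T ` ld_windows S N (i + (k - 1) * \<omega>) (i + k * \<omega> - 1)))
     \<le> \<epsilon> / sqrt (real p)"
proof -
  define X where "X = subseq S i j"
  define L where "L = LD Q"
  define R where "R = LD X"
  define A where "A t = (L ! t - R ! t)^2" for t
  have lX: "length X = n" using assms by (simp add: X_def subseq_def del: upt_Suc)
  have lL: "length L = n" "length R = n" using assms lX by (simp_all add: L_def R_def LD_len)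
  have A0: "\<And>t. A t \<ge> 0" by (simp add: A_def)
  have "(\<Sum>t<p*\<omega>. A t) \<le> (\<Sum>t<n. A t)"
    using assms A0 by (intro sum_mono2) auto
  also have "\<dots> = (dist_l L R)^2" using lL by (simp add: dist_l_def A_def sum_nonneg)
  also have "\<dots> \<le> \<epsilon>^2"
    using assms by (intro power_mono) (auto simp: L_def R_def X_def dist_l_def intro!: sum_nonneg)
  finally obtain m where m: "m < p" and sm: "sqrt (\<Sum>t<\<omega>. A (m*\<omega>+t)) \<le> \<epsilon> / sqrt (real p)"
    using exists_small[where A=A and p=p and \<epsilon>=\<epsilon> and \<omega>=\<omega>] A0 assms(8) assms(6) by blast
  define q where "q = take \<omega> (drop (m*\<omega>) L)"
  define w where "w = take \<omega> (drop (m*\<omega>) R)"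
  have mw: "(m+1)*\<omega> \<le> n" using m assms(9)
    by (metis Suc_eq_plus1 Suc_leI le_trans mult_le_mono1)
  have lq: "length q = \<omega>" "length w = \<omega>" using mw lL by (auto simp: q_def w_def)
  have dqw: "dist_l q w = sqrt (\<Sum>t<\<omega>. A (m*\<omega>+t))"
    using lq mw lL by (simp add: dist_l_def q_def w_def A_def)
  define a where "a = i + m*\<omega>"
  define b where "b = i + (m+1)*\<omega> - 1"
  have bab: "b = a + \<omega> - 1" using assms by (simp add: a_def b_def)
  have wwin: "w = ld_window S i j a b"
    unfolding w_def R_def X_def bab a_def
    by (rule window_eq) (use mw assms in auto)
  define P where "P = T ` ld_windows S N a b"
  have win_in: "w \<in> ld_windows S N a b"
    unfolding ld_windows_def wwin
  proof (intro CollectI exI conjI)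
    show "ld_window S i j a b = ld_window S i j a b" ..
  qed (use assms mw in \<open>auto simp: a_def b_def\<close>)
  have fin: "finite (ld_windows S N a b)"
  proof -
    have "ld_windows S N a b \<subseteq> (\<lambda>(i',j'). ld_window S i' j' a b) ` ({1..a}\<times>{b..N})"
      unfolding ld_windows_def by auto
    thus ?thesis by (rule finite_subset) auto
  qed
  have finP: "finite P" using fin by (simp add: P_def)
  have TwM: "T w \<in> MBR f P"
  proof -
    have Tw: "T w \<in> P" using win_in by (simp add: P_def)
    show ?thesis unfolding MBR_def
    proof (intro CollectI conjI allI impI)
      show "length (T w) = f" using assms(10) lq by simp
      fix d assume "d < f"
      have bb: "bdd_below ((\<lambda>x. x ! d) ` P)" "bdd_above ((\<lambda>x. x ! d) ` P)"
        using finP by auto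
      show "(INF x\<in>P. x ! d) \<le> T w ! d" using Tw bb by (intro cINF_lower)
      show "T w ! d \<le> (SUP x\<in>P. x ! d)" using Tw bb by (intro cSUP_upper)
    qed
  qed
  have "dist_box (T q) (MBR f P) \<le> dist_l (T q) (T w)"
    unfolding dist_box_def
  proof (rule cINF_lower[OF _ TwM])
    show "bdd_below ((\<lambda>y. dist_l (T q) y) ` MBR f P)"
      by (rule bdd_belowI[where m=0]) (auto simp: dist_l_def intro!: sum_nonneg)
  qed
  also have "\<dots> \<le> dist_l q w" using assms(11) lq by simp
  finally have fin_ineq: "dist_box (T q) (MBR f P) \<le> \<epsilon> / sqrt (real p)" using dqw sm by simp
  show ?thesis
  proof (rule bexI[where x="m+1"])
    show "m+1 \<in> {1..p}" using m by simp
    show "dist_box (T (take \<omega> (drop ((m+1 - 1) * \<omega>) (LD Q))))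
       (MBR f (T ` ld_windows S N (i + (m+1 - 1) * \<omega>) (i + (m+1) * \<omega> - 1)))
     \<le> \<epsilon> / sqrt (real p)"
      using fin_ineq by (simp add: q_def L_def P_def a_def b_def)
  qed
qed

end
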